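(* Define the linear functions $H_1,H_2,H_3,H_4:\mathbb{R}^3\to\mathbb{R}$ by $H_1(x)=x_1-x_2-x_3$, $H_2(x)=x_1-x_2+x_3$, $H_3(x)=x_1+x_2-x_3$, $H_4(x)=x_1+x_2+x_3$, and the sets $C_1^0=\{x\in\mathbb{R}^3: H_1(x)>0,\,H_2(x)>0,\,H_3(x)>0,\,H_4(x)>0\}\cup\{0\}$, $C_2^0=\{x\in\mathbb{R}^3: H_1(x)<0,\,H_2(x)<0,\,H_3(x)>0,\,H_4(x)>0\}\cup\{0\}$, $C_3^0=\{x\in\mathbb{R}^3: H_1(x)<0,\,H_2(x)>0,\,H_3(x)<0,\,H_4(x)>0\}\cup\{0\}$. Then the cones $C_1^0,C_2^0,C_3^0$ are cotransverse.
   Context: A subset $X\subseteq\mathbb{R}^3$ is a cone if $x\in X$ and $\lambda\ge 0$ imply $\lambda x\in X$. The convex hull of a set $X$ is $\mathrm{conv}\,X=\{\sum_{i=1}^n\lambda_i x_i: x_i\in X,\ n\in\mathbb{N},\ \lambda_i\ge0,\ \sum_i\lambda_i=1\}$; the convex hull of several cones means the convex hull of their union. Two cones $C,D$ are transverse if $C\cup(-C)$ and $D\cup(-D)$ intersect only in $\{0\}$. Three cones $C_1,C_2,C_3$ are cotransverse if the origin is a vertex of the convex hull of $C_1,C_2,C_3$ and, for every $\{i,j,k\}=\{1,2,3\}$, the cone $C_i$ and the convex hull of the cones $C_j,C_k$ are transverse. *)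

theory Defs
  imports "HOL-Analysis.Analysis"
begin

definition is_cone :: "(real^3) set \<Rightarrow> bool" where
  "is_cone X \<longleftrightarrow> (\<forall>x\<in>X. \<forall>t::real. t \<ge> 0 \<longrightarrow> t *\<^sub>R x \<in> X)"

definition transverse :: "(real^3) set \<Rightarrow> (real^3) set \<Rightarrow> bool" where
  "transverse C D \<longleftrightarrow> (C \<union> uminus ` C) \<inter> (D \<union> uminus ` D) \<subseteq> {0}"

text \<open>The origin being a vertex of a convex set is rendered as the origin being an
  extreme point of it.\<close>
definition cotransverse :: "(real^3) set \<Rightarrow> (real^3) set \<Rightarrow> (real^3) set \<Rightarrow> bool" where
  "cotransverse C1 C2 C3 \<longleftrightarrow>
     0 extreme_point_of (convex hull (C1 \<union> C2 \<union> C3)) \<and>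
     transverse C1 (convex hull (C2 \<union> C3)) \<and>
     transverse C2 (convex hull (C1 \<union> C3)) \<and>
     transverse C3 (convex hull (C1 \<union> C2))"

definition H1 :: "real^3 \<Rightarrow> real" where "H1 x = x$1 - x$2 - x$3"
definition H2 :: "real^3 \<Rightarrow> real" where "H2 x = x$1 - x$2 + x$3"
definition H3 :: "real^3 \<Rightarrow> real" where "H3 x = x$1 + x$2 - x$3"
definition H4 :: "real^3 \<Rightarrow> real" where "H4 x = x$1 + x$2 + x$3"

definition C1_0 :: "(real^3) set" where
  "C1_0 = {x. H1 x > 0 \<and> H2 x > 0 \<and> H3 x > 0 \<and> H4 x > 0} \<union> {0}"
definition C2_0 :: "(real^3) set" where
  "C2_0 = {x. H1 x < 0 \<and> H2 x < 0 \<and> H3 x > 0 \<and> H4 x > 0} \<union> {0}"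
definition C3_0 :: "(real^3) set" where
  "C3_0 = {x. H1 x < 0 \<and> H2 x > 0 \<and> H3 x < 0 \<and> H4 x > 0} \<union> {0}"

end

theory Submission
  imports Defs
begin

lemma conv_pos:
  fixes f g :: "real^3 \<Rightarrow> real"
  assumes lf: "linear f" and lg: "linear g"
  shows "convex ({x. f x > 0 \<and> g x > 0} \<union> {0})"
  unfolding convex_def
proof (intro ballI allI impI)
  fix x y :: "real^3" and u v :: real
  assume x: "x \<in> {x. f x > 0 \<and> g x > 0} \<union> {0}" and y: "y \<in> {x. f x > 0 \<and> g x > 0} \<union> {0}"
    and u: "0 \<le> u" and v: "0 \<le> v" and uv: "u + v = 1"
  have ef: "f (u *\<^sub>R x + v *\<^sub>R y) = u * f x + v * f y"
    using lf by (simp add: linear_add linear_scale)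
  have eg: "g (u *\<^sub>R x + v *\<^sub>R y) = u * g x + v * g y"
    using lg by (simp add: linear_add linear_scale)
  have f0: "f 0 = 0" using lf by (simp add: linear_0)
  have g0: "g 0 = 0" using lg by (simp add: linear_0)
  show "u *\<^sub>R x + v *\<^sub>R y \<in> {x. f x > 0 \<and> g x > 0} \<union> {0}"
  proof (cases "x = 0")
    case True
    show ?thesis
    proof (cases "y = 0 \<or> v = 0")
      case True with \<open>x = 0\<close> show ?thesis by auto
    next
      case False
      then have "v > 0" "f y > 0" "g y > 0" using v y by auto
      then show ?thesis using \<open>x = 0\<close> ef eg f0 g0 by (simp add: mult_pos_pos)
    qed
  next
    case xn: False
    then have fx: "f x > 0" "g x > 0" using x by auto
    show ?thesis
    proof (cases "y = 0")
      case True
      show ?thesis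
      proof (cases "u = 0")
        case True with \<open>y = 0\<close> show ?thesis by auto
      next
        case False
        then have "u > 0" using u by auto
        then show ?thesis using \<open>y = 0\<close> ef eg f0 g0 fx by (simp add: mult_pos_pos)
      qed
    next
      case False
      then have fy: "f y > 0" "g y > 0" using y by auto
      have "u * f x + v * f y > 0"
      proof (cases "u = 0")
        case True then show ?thesis using uv fy by simp
      next
        case False then have "u > 0" using u by auto
        then show ?thesis using fx fy v by (smt (verit) mult_nonneg_nonneg mult_pos_pos)
      qed
      moreover have "u * g x + v * g y > 0"
      proof (cases "u = 0")
        case True then show ?thesis using uv fy by simp
      next
        case False then have "u > 0" using u by auto
        then show ?thesis using fx fy v by (smt (verit) mult_nonneg_nonneg mult_pos_pos)
      qed
      ultimately show ?thesis using ef eg by simp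
    qed
  qed
qed

lemma hull_pos:
  fixes f g :: "real^3 \<Rightarrow> real"
  assumes "linear f" "linear g" "S \<subseteq> {x. f x > 0 \<and> g x > 0} \<union> {0}"
  shows "convex hull S \<subseteq> {x. f x > 0 \<and> g x > 0} \<union> {0}"
  using hull_minimal[of S _ convex] assms(3) conv_pos[OF assms(1,2)] by blast

lemma transv:
  fixes f g :: "real^3 \<Rightarrow> real"
  assumes lf: "linear f" and lg: "linear g"
    and C: "C \<subseteq> {x. - f x > 0 \<and> g x > 0} \<union> {0}"
    and D: "D \<subseteq> {x. f x > 0 \<and> g x > 0} \<union> {0}"
  shows "transverse C D"
  unfolding transverse_def
proof
  fix z assume z: "z \<in> (C \<union> uminus ` C) \<inter> (D \<union> uminus ` D)"
  have nf: "\<And>x. f (- x) = - f x" using lf by (simp add: linear_neg)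
  have ng: "\<And>x. g (- x) = - g x" using lg by (simp add: linear_neg)
  show "z \<in> {0}"
  proof (rule ccontr)
    assume zn: "z \<notin> {0}"
    from z have "z \<in> C \<or> -z \<in> C" by auto
    moreover from z have "z \<in> D \<or> -z \<in> D" by auto
    ultimately show False using C D zn nf ng by (auto, (fastforce)+)
  qed
qed

lemma lin3: "linear (\<lambda>x::real^3. a * x$1 + b * x$2 + c * x$3)"
  by (rule linearI) (auto simp: algebra_simps)

theorem lemma1:
  shows "cotransverse C1_0 C2_0 C3_0"
proof -
  let ?h = "\<lambda>x::real^3. 1 * x$1 + 1 * x$2 + 1 * x$3"
  have lh: "linear ?h" by (rule lin3)
  have U: "C1_0 \<union> C2_0 \<union> C3_0 \<subseteq> {x. ?h x > 0 \<and> ?h x > 0} \<union> {0}"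
    unfolding C1_0_def C2_0_def C3_0_def H1_def H2_def H3_def H4_def by auto
  have HU: "convex hull (C1_0 \<union> C2_0 \<union> C3_0) \<subseteq> {x. ?h x > 0 \<and> ?h x > 0} \<union> {0}"
    by (rule hull_pos[OF lh lh U])
  have ext: "0 extreme_point_of (convex hull (C1_0 \<union> C2_0 \<union> C3_0))"
    unfolding extreme_point_of_def
  proof (intro conjI ballI)
    show "0 \<in> convex hull (C1_0 \<union> C2_0 \<union> C3_0)"
      by (rule hull_inc) (simp add: C1_0_def)
  next
    fix a b assume a: "a \<in> convex hull (C1_0 \<union> C2_0 \<union> C3_0)" and b: "b \<in> convex hull (C1_0 \<union> C2_0 \<union> C3_0)"
    show "0 \<notin> open_segment a b"
    proof
      assume "0 \<in> open_segment a b"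
      then obtain u where u: "0 < u" "u < 1" and e: "0 = (1 - u) *\<^sub>R a + u *\<^sub>R b" and ab: "a \<noteq> b"
        by (auto simp: in_segment)
      have "?h ((1 - u) *\<^sub>R a + u *\<^sub>R b) = (1 - u) * ?h a + u * ?h b"
        using lh by (simp add: linear_add linear_scale)
      then have s: "(1 - u) * ?h a + u * ?h b = 0" using e[symmetric] by simp
      have ha: "a = 0 \<or> ?h a > 0" using a HU by auto
      have hb: "b = 0 \<or> ?h b > 0" using b HU by auto
      have p1: "(1 - u) * ?h a \<ge> 0" using ha u by auto
      have p2: "u * ?h b \<ge> 0" using hb u by auto
      have "a = 0"
      proof (rule ccontr)
        assume "a \<noteq> 0" then have "?h a > 0" using ha by auto
        then have "(1 - u) * ?h a > 0" using u by simp
        then show False using s p2 by linarith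
      qed
      moreover have "b = 0"
      proof (rule ccontr)
        assume "b \<noteq> 0" then have "?h b > 0" using hb by auto
        then have "u * ?h b > 0" using u by simp
        then show False using s p1 by linarith
      qed
      ultimately show False using ab by simp
    qed
  qed
  have t1: "transverse C1_0 (convex hull (C2_0 \<union> C3_0))"
  proof (rule transv[OF lin3[of "-1" 1 1] lh])
    show "C1_0 \<subseteq> {x. - (-1 * x$1 + 1 * x$2 + 1 * x$3) > 0 \<and> ?h x > 0} \<union> {0}"
      unfolding C1_0_def H1_def H2_def H3_def H4_def by auto
    show "convex hull (C2_0 \<union> C3_0) \<subseteq> {x. (-1 * x$1 + 1 * x$2 + 1 * x$3) > 0 \<and> ?h x > 0} \<union> {0}"
      by (rule hull_pos[OF lin3 lh]) (auto simp: C2_0_def C3_0_def H1_def H2_def H3_def H4_def)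
  qed
  have t2: "transverse C2_0 (convex hull (C1_0 \<union> C3_0))"
  proof (rule transv[OF lin3[of 1 "-1" 1] lh])
    show "C2_0 \<subseteq> {x. - (1 * x$1 + -1 * x$2 + 1 * x$3) > 0 \<and> ?h x > 0} \<union> {0}"
      unfolding C2_0_def H1_def H2_def H3_def H4_def by auto
    show "convex hull (C1_0 \<union> C3_0) \<subseteq> {x. (1 * x$1 + -1 * x$2 + 1 * x$3) > 0 \<and> ?h x > 0} \<union> {0}"
      by (rule hull_pos[OF lin3 lh]) (auto simp: C1_0_def C3_0_def H1_def H2_def H3_def H4_def)
  qed
  have t3: "transverse C3_0 (convex hull (C1_0 \<union> C2_0))"
  proof (rule transv[OF lin3[of 1 1 "-1"] lh])
    show "C3_0 \<subseteq> {x. - (1 * x$1 + 1 * x$2 + -1 * x$3) > 0 \<and> ?h x > 0} \<union> {0}"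
      unfolding C3_0_def H1_def H2_def H3_def H4_def by auto
    show "convex hull (C1_0 \<union> C2_0) \<subseteq> {x. (1 * x$1 + 1 * x$2 + -1 * x$3) > 0 \<and> ?h x > 0} \<union> {0}"
      by (rule hull_pos[OF lin3 lh]) (auto simp: C1_0_def C2_0_def H1_def H2_def H3_def H4_def)
  qed
  show ?thesis unfolding cotransverse_def using ext t1 t2 t3 by blast
qed

end
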